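(* Under the setup below, fix $K=(k_1,\dots,k_r)$. Let $C_K(y)$ be the matrix with rows indexed by multi-indices $\beta\in\mathbb N^r$ of degree $1$ and columns indexed by pairs $(\gamma,L)$, where $\gamma\in\mathbb N^r$ has degree $r-1$ and $L$ ranges over ordered $r$-tuples of distinct elements of $[d]$, with entries $C_K(y)_{\beta,(\gamma,L)}=D_{\beta+\gamma,L}(y)$. Then all $2\times2$ minors of $C_K(y)$ are homogeneous polynomials of degree $2r$ vanishing on the attention variety.
   Context: Setup: $d'=1$, $t>1$, $Q,K\in\mathbb R^{a\times d}$, $V\in\mathbb R^{1\times d}$ with row $v$, $A=K^\top Q$, $\varphi_W(X)=VX(X^\top AX)$, $X=(x_{kn})\in\mathbb R^{d\times t}$; fix $j\in[t]$, $n\ne j$, and $2\le r\le\min(a,d)$; $k_1,\dots,k_r$ are distinct elements of $[d]$. $y_{n,j}(\mathcal A,b)$ denotes the coefficient of $(\prod_{u\in\mathcal A}x_{un})x_{bj}$ in $\varphi_W(X)[1,j]$ divided by the number of distinct orderings of the size-2 multiset $\mathcal A$; $\omega(u,w)=1$ if $u=w$, $2$ otherwise. For $\alpha\in\mathbb N^r$ with $|\alpha|=r$, choose $f:[r]\to[r]$ with $|f^{-1}(m)|=\alpha_m$ whose only directed cycles are fixed points, and for a tuple $L=(l_1,\dots,l_r)$ of distinct indices set $D_{\alpha,L}(y)=\det\big(\omega(k_{f(p)},k_p)\,y_{n,j}(\{k_{f(p)},k_p\},l_q)\big)_{p,q=1}^r$; on $\mu(W)$ this equals $(\prod_m v_{k_m}^{\alpha_m})\det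 A_{K,L}$. $\mu$ maps $W$ to all scaled coefficients; the attention variety is the Zariski closure of $\operatorname{im}\mu$. *)

theory Defs
  imports "HOL-Library.Poly_Mapping" "HOL-Combinatorics.Multiset_Permutations"
          "Jordan_Normal_Form.Determinant"
begin

(* Indices are 0-based: [d] = {..<d}, [t] = {..<t}, [r] = {..<r}, [a] = {..<a}. *)

type_synonym 'v rpoly = "('v \<Rightarrow>\<^sub>0 nat) \<Rightarrow>\<^sub>0 real"

definition pvar :: "'v \<Rightarrow> 'v rpoly" where
  "pvar i = Poly_Mapping.single (Poly_Mapping.single i 1) 1"

definition pconst :: "real \<Rightarrow> 'v rpoly" where
  "pconst c = Poly_Mapping.single 0 c"

definition peval :: "'v rpoly \<Rightarrow> ('v \<Rightarrow> real) \<Rightarrow> real" where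
  "peval p y = (\<Sum>m\<in>Poly_Mapping.keys p. Poly_Mapping.lookup p m * (\<Prod>i\<in>Poly_Mapping.keys m. y i ^ Poly_Mapping.lookup m i))"

definition homogeneous_poly :: "nat \<Rightarrow> 'v rpoly \<Rightarrow> bool" where
  "homogeneous_poly D p \<longleftrightarrow> (\<forall>m\<in>Poly_Mapping.keys p. (\<Sum>i\<in>Poly_Mapping.keys m. Poly_Mapping.lookup m i) = D)"

definition zariski_closure :: "('v \<Rightarrow> real) set \<Rightarrow> ('v \<Rightarrow> real) set" where
  "zariski_closure S = {y. \<forall>p :: 'v rpoly. (\<forall>z\<in>S. peval p z = 0) \<longrightarrow> peval p y = 0}"

definition Amat :: "nat \<Rightarrow> (nat \<Rightarrow> nat \<Rightarrow> real) \<Rightarrow> (nat \<Rightarrow> nat \<Rightarrow> real) \<Rightarrow> nat \<Rightarrow> nat \<Rightarrow> real" where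
  "Amat a Q K u b = (\<Sum>i<a. K i u * Q i b)"

(* phi_W(X)[1,j] = sum_n (V X)_n (X^T A X)_{n j}, as a polynomial in the variables x_{kn} = pvar (k,n) *)
definition phi_poly :: "nat \<Rightarrow> nat \<Rightarrow> nat \<Rightarrow> (nat \<Rightarrow> nat \<Rightarrow> real) \<Rightarrow> (nat \<Rightarrow> nat \<Rightarrow> real)
    \<Rightarrow> (nat \<Rightarrow> real) \<Rightarrow> nat \<Rightarrow> (nat \<times> nat) rpoly" where
  "phi_poly a d t Q K v j =
     (\<Sum>n<t. (\<Sum>k<d. pconst (v k) * pvar (k, n)) *
             (\<Sum>u<d. \<Sum>b<d. pvar (u, n) * pconst (Amat a Q K u b) * pvar (b, j)))"

definition outside_col :: "nat \<Rightarrow> ((nat \<times> nat) \<Rightarrow>\<^sub>0 nat) \<Rightarrow> nat multiset" where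
  "outside_col j m = (\<Sum>x\<in>{x\<in>Poly_Mapping.keys m. snd x \<noteq> j}. replicate_mset (Poly_Mapping.lookup m x) (fst x))"

(* coordinates of the ambient space: pairs (j, monomial in the x_{kn}) *)
type_synonym coord = "nat \<times> ((nat \<times> nat) \<Rightarrow>\<^sub>0 nat)"

definition mu :: "nat \<Rightarrow> nat \<Rightarrow> nat \<Rightarrow> (nat \<Rightarrow> nat \<Rightarrow> real) \<Rightarrow> (nat \<Rightarrow> nat \<Rightarrow> real)
    \<Rightarrow> (nat \<Rightarrow> real) \<Rightarrow> coord \<Rightarrow> real" where
  "mu a d t Q K v c = (case c of (j, m) \<Rightarrow>
     if j < t then Poly_Mapping.lookup (phi_poly a d t Q K v j) m
                   / real (card (permutations_of_multiset (outside_col j m)))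
     else 0)"

definition attention_variety :: "nat \<Rightarrow> nat \<Rightarrow> nat \<Rightarrow> (coord \<Rightarrow> real) set" where
  "attention_variety a d t = zariski_closure {mu a d t Q K v | Q K v. True}"

(* coordinate y_{n,j}({u,w}, b): coefficient of x_{un} x_{wn} x_{bj} *)
definition ycoord :: "nat \<Rightarrow> nat \<Rightarrow> nat \<Rightarrow> nat \<Rightarrow> nat \<Rightarrow> coord" where
  "ycoord n j u w b = (j, Poly_Mapping.single (u, n) 1 + Poly_Mapping.single (w, n) 1
                          + Poly_Mapping.single (b, j) 1)"

definition omega :: "nat \<Rightarrow> nat \<Rightarrow> real" where
  "omega u w = (if u = w then 1 else 2)"

definition multi_index :: "nat \<Rightarrow> nat \<Rightarrow> (nat \<Rightarrow> nat) \<Rightarrow> bool" where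
  "multi_index r s \<alpha> \<longleftrightarrow> (\<forall>m\<ge>r. \<alpha> m = 0) \<and> (\<Sum>m<r. \<alpha> m) = s"

definition admissible_f :: "nat \<Rightarrow> (nat \<Rightarrow> nat) \<Rightarrow> (nat \<Rightarrow> nat) \<Rightarrow> bool" where
  "admissible_f r \<alpha> f \<longleftrightarrow>
     (\<forall>p<r. f p < r) \<and>
     (\<forall>m<r. card {p\<in>{..<r}. f p = m} = \<alpha> m) \<and>
     (\<forall>p<r. \<forall>i\<ge>1. (f ^^ i) p = p \<longrightarrow> f p = p)"

definition distinct_tuple :: "nat \<Rightarrow> nat \<Rightarrow> (nat \<Rightarrow> nat) \<Rightarrow> bool" where
  "distinct_tuple d r L \<longleftrightarrow> (\<forall>q<r. L q < d) \<and> inj_on L {..<r}"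

definition Dval :: "nat \<Rightarrow> (nat \<Rightarrow> nat) \<Rightarrow> nat \<Rightarrow> nat \<Rightarrow> (nat \<Rightarrow> nat) \<Rightarrow> (nat \<Rightarrow> nat)
    \<Rightarrow> (coord \<Rightarrow> real) \<Rightarrow> real" where
  "Dval r k n j f L y = det (mat r r (\<lambda>(p, q).
      omega (k (f p)) (k p) * y (ycoord n j (k (f p)) (k p) (L q))))"

definition CK :: "nat \<Rightarrow> (nat \<Rightarrow> nat) \<Rightarrow> nat \<Rightarrow> nat \<Rightarrow> ((nat \<Rightarrow> nat) \<Rightarrow> nat \<Rightarrow> nat)
    \<Rightarrow> (nat \<Rightarrow> nat) \<Rightarrow> (nat \<Rightarrow> nat) \<Rightarrow> (nat \<Rightarrow> nat) \<Rightarrow> (coord \<Rightarrow> real) \<Rightarrow> real" where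
  "CK r k n j F \<beta> \<gamma> L y = Dval r k n j (F (\<lambda>m. \<beta> m + \<gamma> m)) L y"

end

theory Submission
  imports Defs
begin

lemma det_expand:
  fixes a :: "nat \<Rightarrow> nat \<Rightarrow> real"
  shows "det (mat r r (\<lambda>(p,q). c p * a p q + e p * a (f p) q)) =
    (\<Sum>X\<in>Pow {0..<r}. ((\<Prod>i\<in>X. e i) * (\<Prod>i\<in>{0..<r}-X. c i)) *
        det (mat r r (\<lambda>(p,q). a (if p \<in> X then f p else p) q)))"
proof -
  let ?A = "{0..<r}"
  let ?g = "\<lambda>X p. if p \<in> X then f p else p"
  have step: "(\<Prod>i\<in>?A. c i * a i (\<sigma> i) + e i * a (f i) (\<sigma> i)) =
     (\<Sum>X\<in>Pow ?A. ((\<Prod>i\<in>X. e i) * (\<Prod>i\<in>?A-X. c i)) * (\<Prod>i\<in>?A. a (?g X i) (\<sigma> i)))" for \<sigma>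
  proof -
    have "(\<Prod>i\<in>?A. c i * a i (\<sigma> i) + e i * a (f i) (\<sigma> i)) =
       (\<Prod>i\<in>?A. e i * a (f i) (\<sigma> i) + c i * a i (\<sigma> i))" by (simp add: add.commute)
    also have "\<dots> = (\<Sum>X\<in>Pow ?A. (\<Prod>i\<in>X. e i * a (f i) (\<sigma> i)) * (\<Prod>i\<in>?A-X. c i * a i (\<sigma> i)))"
      by (rule prod_add) simp
    also have "\<dots> = (\<Sum>X\<in>Pow ?A. ((\<Prod>i\<in>X. e i) * (\<Prod>i\<in>?A-X. c i)) * (\<Prod>i\<in>?A. a (?g X i) (\<sigma> i)))"
    proof (rule sum.cong[OF refl])
      fix X assume X: "X \<in> Pow ?A"
      have fx: "finite X" using X finite_subset by auto
      have "(\<Prod>i\<in>?A. a (?g X i) (\<sigma> i)) = (\<Prod>i\<in>X. a (?g X i) (\<sigma> i)) * (\<Prod>i\<in>?A-X. a (?g X i) (\<sigma> i))"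
        using X by (metis (no_types, lifting) PowD finite_atLeastLessThan mult.commute prod.subset_diff)
      also have "\<dots> = (\<Prod>i\<in>X. a (f i) (\<sigma> i)) * (\<Prod>i\<in>?A-X. a i (\<sigma> i))"
        by (intro arg_cong2[where f="(*)"] prod.cong) auto
      finally show "(\<Prod>i\<in>X. e i * a (f i) (\<sigma> i)) * (\<Prod>i\<in>?A-X. c i * a i (\<sigma> i)) =
         ((\<Prod>i\<in>X. e i) * (\<Prod>i\<in>?A-X. c i)) * (\<Prod>i\<in>?A. a (?g X i) (\<sigma> i))"
        by (simp add: prod.distrib)
    qed
    finally show ?thesis .
  qed
  have "det (mat r r (\<lambda>(p,q). c p * a p q + e p * a (f p) q)) =
     (\<Sum>\<sigma>\<in>{\<sigma>. \<sigma> permutes ?A}. signof \<sigma> * (\<Prod>i\<in>?A. c i * a i (\<sigma> i) + e i * a (f i) (\<sigma> i)))"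
    apply (subst det_def'[where n=r])
     apply simp
    apply (rule sum.cong[OF refl])
    apply (rule arg_cong2[where f="(*)", OF refl])
    apply (rule prod.cong[OF refl])
    by (auto simp: permutes_def)
  also have "\<dots> = (\<Sum>\<sigma>\<in>{\<sigma>. \<sigma> permutes ?A}. \<Sum>X\<in>Pow ?A. ((\<Prod>i\<in>X. e i) * (\<Prod>i\<in>?A-X. c i)) *
       (signof \<sigma> * (\<Prod>i\<in>?A. a (?g X i) (\<sigma> i))))"
    by (simp add: step sum_distrib_left mult.left_commute)
  also have "\<dots> = (\<Sum>X\<in>Pow ?A. \<Sum>\<sigma>\<in>{\<sigma>. \<sigma> permutes ?A}. ((\<Prod>i\<in>X. e i) * (\<Prod>i\<in>?A-X. c i)) *
       (signof \<sigma> * (\<Prod>i\<in>?A. a (?g X i) (\<sigma> i))))"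
    by (rule sum.swap)
  also have "\<dots> = (\<Sum>X\<in>Pow {0..<r}. ((\<Prod>i\<in>X. e i) * (\<Prod>i\<in>{0..<r}-X. c i)) *
        det (mat r r (\<lambda>(p,q). a (if p \<in> X then f p else p) q)))"
  proof (rule sum.cong[OF refl])
    fix X assume X: "X \<in> Pow ?A"
    show "(\<Sum>\<sigma>\<in>{\<sigma>. \<sigma> permutes ?A}. ((\<Prod>i\<in>X. e i) * (\<Prod>i\<in>?A-X. c i)) *
       (signof \<sigma> * (\<Prod>i\<in>?A. a (?g X i) (\<sigma> i)))) = ((\<Prod>i\<in>X. e i) * (\<Prod>i\<in>{0..<r}-X. c i)) *
        det (mat r r (\<lambda>(p,q). a (if p \<in> X then f p else p) q))"
      apply (subst det_def'[where n=r])
       apply simp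
      apply (subst sum_distrib_left)
      apply (rule sum.cong[OF refl])
      apply (rule arg_cong2[where f="(*)", OF refl])+
      apply (rule prod.cong[OF refl])
      by (auto simp: permutes_def)
  qed
  finally show ?thesis .
qed

lemma funpow_in: assumes "\<forall>q\<in>A. g q \<in> A" "x \<in> A" shows "(g^^m) x \<in> A"
  using assms by (induction m) auto

lemma funpow_cancel: assumes "inj_on g A" "\<forall>q\<in>A. g q \<in> A" "x \<in> A" "y \<in> A" "(g^^m) x = (g^^m) y"
  shows "x = y"
  using assms(5)
proof (induction m)
  case 0 then show ?case by simp
next
  case (Suc m)
  have "g ((g^^m) x) = g ((g^^m) y)" using Suc.prems by simp
  then have "(g^^m) x = (g^^m) y" using assms funpow_in by (metis inj_on_def)
  then show ?case using Suc.IH by simp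
qed

lemma funpow_fixed: assumes "g x = x" shows "(g^^m) x = x"
  using assms by (induction m) auto

lemma not_inj_g:
  fixes f :: "nat \<Rightarrow> nat"
  assumes fr: "\<forall>p<r. f p < r" and cyc: "\<forall>p<r. \<forall>i\<ge>1. (f ^^ i) p = p \<longrightarrow> f p = p"
    and X: "X \<subseteq> {0..<r}" and pX: "p \<in> X" and nf: "\<forall>q\<in>X. f q \<noteq> q"
  shows "\<not> inj_on (\<lambda>q. if q \<in> X then f q else q) {0..<r}"
proof
  define g where "g = (\<lambda>q. if q \<in> X then f q else q)"
  assume inj: "inj_on (\<lambda>q. if q \<in> X then f q else q) {0..<r}"
  then have inj: "inj_on g {0..<r}" by (simp add: g_def)
  have gA: "\<forall>q\<in>{0..<r}. g q \<in> {0..<r}" using fr X by (auto simp: g_def)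
  have pA: "p \<in> {0..<r}" using X pX by auto
  have "\<not> inj_on (\<lambda>m. (g^^m) p) {0..r}"
  proof
    assume "inj_on (\<lambda>m. (g^^m) p) {0..r}"
    moreover have "(\<lambda>m. (g^^m) p) ` {0..r} \<subseteq> {0..<r}" using funpow_in[OF gA pA] by auto
    ultimately have "card {0..r} \<le> card {0..<r}" by (meson card_inj_on_le finite_atLeastLessThan)
    then show False by simp
  qed
  then obtain m1 m2 where m: "m1 \<le> r" "m2 \<le> r" "m1 \<noteq> m2" "(g^^m1) p = (g^^m2) p"
    unfolding inj_on_def by auto
  obtain i where i: "i \<ge> 1" "(g^^i) p = p"
  proof (cases "m1 < m2")
    case True
    have "(g^^m1) ((g^^(m2-m1)) p) = (g^^m1) p"
      using m True by (metis funpow_add le_add_diff_inverse less_imp_le o_apply)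
    then have "(g^^(m2-m1)) p = p"
      using funpow_cancel[OF inj gA funpow_in[OF gA pA] pA] by blast
    then show ?thesis using that[of "m2-m1"] True by simp
  next
    case False
    then have F: "m2 < m1" using m by simp
    have "(g^^m2) ((g^^(m1-m2)) p) = (g^^m2) p"
      using m F by (metis funpow_add le_add_diff_inverse less_imp_le o_apply)
    then have "(g^^(m1-m2)) p = p"
      using funpow_cancel[OF inj gA funpow_in[OF gA pA] pA] by blast
    then show ?thesis using that[of "m1-m2"] F by simp
  qed
  have inX: "(g^^m) p \<in> X" if "m < i" for m
  proof (rule ccontr)
    assume nX: "(g^^m) p \<notin> X"
    then have "g ((g^^m) p) = (g^^m) p" by (simp add: g_def)
    then have "(g^^(i-m)) ((g^^m) p) = (g^^m) p" by (rule funpow_fixed)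
    then have "(g^^i) p = (g^^m) p" using that by (metis funpow_add le_add_diff_inverse2 less_imp_le o_apply)
    then show False using i nX pX by simp
  qed
  have "m \<le> i \<Longrightarrow> (g^^m) p = (f^^m) p" for m
  proof (induction m)
    case 0 then show ?case by simp
  next
    case (Suc m)
    then have mi: "m < i" "m \<le> i" by simp_all
    have "(g^^m) p \<in> X" using inX[OF mi(1)] .
    moreover have "(g^^m) p = (f^^m) p" using Suc.IH[OF mi(2)] .
    ultimately show ?case by (simp add: g_def)
  qed
  then have "(f^^i) p = p" using i by simp
  then have "f p = p" using cyc pA i by auto
  then show False using nf pX by auto
qed

lemma det_forest:
  fixes a :: "nat \<Rightarrow> nat \<Rightarrow> real" and f :: "nat \<Rightarrow> nat"
  assumes fr: "\<forall>p<r. f p < r" and cyc: "\<forall>p<r. \<forall>i\<ge>1. (f ^^ i) p = p \<longrightarrow> f p = p"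
    and e0: "\<forall>p<r. f p = p \<longrightarrow> e p = 0"
  shows "det (mat r r (\<lambda>(p,q). c p * a p q + e p * a (f p) q)) = (\<Prod>i\<in>{0..<r}. c i) * det (mat r r (\<lambda>(p,q). a p q))"
proof -
  let ?A = "{0..<r}"
  let ?T = "\<lambda>X. ((\<Prod>i\<in>X. e i) * (\<Prod>i\<in>?A-X. c i)) *
        det (mat r r (\<lambda>(p,q). a (if p \<in> X then f p else p) q))"
  have z: "?T X = 0" if X: "X \<in> Pow ?A - {{}}" for X
  proof (cases "\<exists>p\<in>X. f p = p")
    case True
    then have "(\<Prod>i\<in>X. e i) = 0" using e0 X
      by (metis (no_types, lifting) DiffD1 PowD atLeastLessThan_iff finite_atLeastLessThan finite_subset prod_zero subsetD)
    then show ?thesis by simp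
  next
    case False
    from X obtain p where pX: "p \<in> X" by auto
    have "\<not> inj_on (\<lambda>q. if q \<in> X then f q else q) ?A"
      using not_inj_g[OF fr cyc _ pX] X False by auto
    then obtain i j where ij: "i \<in> ?A" "j \<in> ?A" "i \<noteq> j"
        "(if i \<in> X then f i else i) = (if j \<in> X then f j else j)"
      unfolding inj_on_def by blast
    have "det (mat r r (\<lambda>(p,q). a (if p \<in> X then f p else p) q)) = 0"
      apply (rule det_identical_rows[of _ r i j])
      using ij by (auto intro!: eq_vecI)
    then show ?thesis by simp
  qed
  have "det (mat r r (\<lambda>(p,q). c p * a p q + e p * a (f p) q)) = (\<Sum>X\<in>Pow ?A. ?T X)"
    by (rule det_expand)
  also have "\<dots> = ?T {} + (\<Sum>X\<in>Pow ?A - {{}}. ?T X)"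
    by (subst sum.remove[of _ "{}"]) auto
  also have "(\<Sum>X\<in>Pow ?A - {{}}. ?T X) = 0"
    using z by (intro sum.neutral) blast
  finally show ?thesis
    by simp
qed

lemma s3_eq_mset:
  "(Poly_Mapping.single a (1::nat) + Poly_Mapping.single b 1 + Poly_Mapping.single c 1 =
    Poly_Mapping.single a' 1 + Poly_Mapping.single b' 1 + Poly_Mapping.single c' 1)
   \<longleftrightarrow> {#a,b,c#} = {#a',b',c'#}"
proof -
  have l: "Poly_Mapping.lookup (Poly_Mapping.single a (1::nat) + Poly_Mapping.single b 1 + Poly_Mapping.single c 1) x
     = count {#a,b,c#} x" for a b c x
    by (simp add: lookup_add lookup_single when_def)
  show ?thesis
    by (metis l multiset_eqI poly_mapping_eqI)
qed

lemma mset_cond: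
  fixes n j :: nat
  assumes "n \<noteq> j"
  shows "{#(k,n'),(u',n'),(b',j)#} = {#(u,n),(w,n),(b,j)#} \<longleftrightarrow>
     n' = n \<and> b' = b \<and> ((k = u \<and> u' = w) \<or> (k = w \<and> u' = u))"
  using assms by (auto simp: add_eq_conv_ex)

abbreviation s1 :: "'a \<Rightarrow> 'a \<Rightarrow>\<^sub>0 nat" where "s1 x \<equiv> Poly_Mapping.single x 1"

lemma phi_expand: "phi_poly a d t Q K v j =
  (\<Sum>n'<t. \<Sum>u'<d. \<Sum>b'<d. \<Sum>k<d.
     Poly_Mapping.single (s1 (u',n') + (s1 (b',j) + s1 (k,n'))) (v k * Amat a Q K u' b'))"
  unfolding phi_poly_def pvar_def pconst_def
  by (simp add: sum_distrib_left sum_distrib_right mult_single ac_simps)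

lemma phi_coeff:
  assumes nj: "n \<noteq> j" and n: "n < t" and u: "u < d" and w: "w < d" and b: "b < d"
  shows "Poly_Mapping.lookup (phi_poly a d t Q K v j) (s1 (u,n) + s1 (w,n) + s1 (b,j)) =
     (if u = w then v u * Amat a Q K u b else v u * Amat a Q K w b + v w * Amat a Q K u b)"
proof -
  let ?M = "s1 (u,n) + s1 (w,n) + s1 (b,j)"
  let ?h = "\<lambda>(n',u',b',k). v k * Amat a Q K u' b'"
  let ?P = "\<lambda>(n',u',b',k::nat). s1 (u',n') + (s1 (b',j) + s1 (k,n')) = ?M"
  let ?S = "{..<t} \<times> {..<d} \<times> {..<d} \<times> {..<d}"
  have "Poly_Mapping.lookup (phi_poly a d t Q K v j) ?M =
     (\<Sum>n'<t. \<Sum>u'<d. \<Sum>b'<d. \<Sum>k<d. if s1 (u',n') + (s1 (b',j) + s1 (k,n')) = ?M then v k * Amat a Q K u' b' else 0)"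
    unfolding phi_expand by (simp add: lookup_sum lookup_single when_def)
  also have "\<dots> = (\<Sum>x\<in>?S. if ?P x then ?h x else 0)"
    apply (simp add: sum.cartesian_product)
    by (rule sum.cong) (auto split: prod.splits)
  also have "\<dots> = (\<Sum>x\<in>{x\<in>?S. ?P x}. ?h x)"
    by (simp add: sum.inter_filter)
  also have "{x\<in>?S. ?P x} = {(n,w,b,u),(n,u,b,w)}"
  proof -
    have "?P (n',u',b',k) \<longleftrightarrow> n' = n \<and> b' = b \<and> ((k = u \<and> u' = w) \<or> (k = w \<and> u' = u))" for n' u' b' k
    proof -
      have "?P (n',u',b',k) \<longleftrightarrow> s1 (k,n') + s1 (u',n') + s1 (b',j) = ?M"
        by (simp add: ac_simps)
      also have "\<dots> \<longleftrightarrow> {#(k,n'),(u',n'),(b',j)#} = {#(u,n),(w,n),(b,j)#}"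
        by (rule s3_eq_mset)
      also have "\<dots> \<longleftrightarrow> n' = n \<and> b' = b \<and> ((k = u \<and> u' = w) \<or> (k = w \<and> u' = u))"
        by (rule mset_cond[OF nj])
      finally show ?thesis .
    qed
    then show ?thesis using n u w b by auto
  qed
  finally show ?thesis by (auto simp: mult.commute)
qed

lemma outside_col_M:
  assumes nj: "n \<noteq> (j::nat)"
  shows "outside_col j (s1 (u,n) + s1 (w,n) + s1 (b,j)) = {#u,w#}"
proof -
  let ?M = "s1 (u,n) + s1 (w,n) + s1 (b,j)"
  have l: "Poly_Mapping.lookup ?M x = count {#(u,n),(w,n),(b,j)#} x" for x
    by (simp add: lookup_add lookup_single when_def)
  have k: "Poly_Mapping.keys ?M = {(u,n),(w,n),(b,j)}"
    unfolding set_eq_iff in_keys_iff l by auto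
  have f: "{x\<in>Poly_Mapping.keys ?M. snd x \<noteq> j} = {(u,n),(w,n)}"
    using nj k by auto
  show ?thesis
  proof (cases "u = w")
    case True
    then show ?thesis unfolding outside_col_def f l using nj
      by (simp add: numeral_2_eq_2)
  next
    case False
    then show ?thesis unfolding outside_col_def f l using nj
      by simp
  qed
qed

lemma mu_entry:
  assumes jt: "j < t" and nt: "n < t" and nj: "n \<noteq> j" and u: "u < d" and w: "w < d" and b: "b < d"
  shows "omega u w * mu a d t Q K v (ycoord n j u w b) =
     v u * Amat a Q K w b + (if u = w then 0 else v w * Amat a Q K u b)"
proof -
  have c: "card (permutations_of_multiset {#u,w#}) = (if u = w then 1 else 2)"
    by (simp add: permutations_of_multiset_doubleton)
  show ?thesis
    unfolding mu_def ycoord_def prod.case outside_col_M[OF nj] c phi_coeff[OF nj nt u w b]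
    using jt by (simp add: omega_def)
qed

definition mono_ev :: "('v \<Rightarrow>\<^sub>0 nat) \<Rightarrow> ('v \<Rightarrow> real) \<Rightarrow> real" where
  "mono_ev m y = (\<Prod>i\<in>Poly_Mapping.keys m. y i ^ Poly_Mapping.lookup m i)"

lemma mono_ev_superset:
  assumes "finite S" "Poly_Mapping.keys m \<subseteq> S"
  shows "mono_ev m y = (\<Prod>i\<in>S. y i ^ Poly_Mapping.lookup m i)"
  unfolding mono_ev_def using assms
  by (intro prod.mono_neutral_left) (auto simp: in_keys_iff)

lemma mono_ev_add: "mono_ev (m1 + m2) y = mono_ev m1 y * mono_ev m2 y"
proof -
  let ?S = "Poly_Mapping.keys m1 \<union> Poly_Mapping.keys m2"
  have "mono_ev (m1 + m2) y = (\<Prod>i\<in>?S. y i ^ Poly_Mapping.lookup (m1 + m2) i)"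
    by (rule mono_ev_superset) (use keys_add[of m1 m2] in auto)
  also have "\<dots> = (\<Prod>i\<in>?S. y i ^ Poly_Mapping.lookup m1 i) * (\<Prod>i\<in>?S. y i ^ Poly_Mapping.lookup m2 i)"
    by (simp add: lookup_add power_add prod.distrib)
  also have "\<dots> = mono_ev m1 y * mono_ev m2 y"
    by (simp add: mono_ev_superset[of ?S m1] mono_ev_superset[of ?S m2])
  finally show ?thesis .
qed

lemma mono_ev_zero[simp]: "mono_ev 0 y = 1"
  by (simp add: mono_ev_def)

lemma peval_superset:
  assumes "finite S" "Poly_Mapping.keys p \<subseteq> S"
  shows "peval p y = (\<Sum>m\<in>S. Poly_Mapping.lookup p m * mono_ev m y)"
  unfolding peval_def mono_ev_def using assms
  by (intro sum.mono_neutral_left) (auto simp: in_keys_iff)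

lemma peval_add: "peval (p + q) y = peval p y + peval q y"
proof -
  let ?S = "Poly_Mapping.keys p \<union> Poly_Mapping.keys q"
  have "peval (p + q) y = (\<Sum>m\<in>?S. Poly_Mapping.lookup (p + q) m * mono_ev m y)"
    by (rule peval_superset) (use keys_add[of p q] in auto)
  also have "\<dots> = (\<Sum>m\<in>?S. Poly_Mapping.lookup p m * mono_ev m y) + (\<Sum>m\<in>?S. Poly_Mapping.lookup q m * mono_ev m y)"
    by (simp add: lookup_add distrib_right sum.distrib)
  also have "\<dots> = peval p y + peval q y"
    by (simp add: peval_superset[of ?S p] peval_superset[of ?S q])
  finally show ?thesis .
qed

lemma peval_zero[simp]: "peval 0 y = 0"
  by (simp add: peval_def)

lemma peval_single: "peval (Poly_Mapping.single m c) y = c * mono_ev m y"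
  by (subst peval_superset[of "{m}"]) auto

lemma peval_sum: "peval (\<Sum>i\<in>A. f i) y = (\<Sum>i\<in>A. peval (f i) y)"
  by (induction A rule: infinite_finite_induct) (auto simp: peval_add)

lemma poly_singles: "p = (\<Sum>m\<in>Poly_Mapping.keys p. Poly_Mapping.single m (Poly_Mapping.lookup p m))"
proof (rule poly_mapping_eqI)
  fix k
  show "Poly_Mapping.lookup p k = Poly_Mapping.lookup (\<Sum>m\<in>Poly_Mapping.keys p. Poly_Mapping.single m (Poly_Mapping.lookup p m)) k"
    by (auto simp: lookup_sum lookup_single when_def in_keys_iff)
qed

lemma peval_mult: "peval (p * q) y = peval p y * peval (q :: 'v rpoly) y"
proof -
  have "p * q = (\<Sum>a\<in>Poly_Mapping.keys p. \<Sum>b\<in>Poly_Mapping.keys q.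
      Poly_Mapping.single a (Poly_Mapping.lookup p a) * Poly_Mapping.single b (Poly_Mapping.lookup q b))"
    by (subst poly_singles[of p], subst poly_singles[of q]) (simp add: sum_product)
  then have "peval (p * q) y = (\<Sum>a\<in>Poly_Mapping.keys p. \<Sum>b\<in>Poly_Mapping.keys q.
      (Poly_Mapping.lookup p a * mono_ev a y) * (Poly_Mapping.lookup q b * mono_ev b y))"
    by (simp add: peval_sum mult_single peval_single mono_ev_add ac_simps)
  also have "\<dots> = peval p y * peval q y"
    by (simp add: peval_def mono_ev_def sum_product)
  finally show ?thesis .
qed

lemma peval_one: "peval 1 y = 1"
  by (simp add: peval_def)

lemma peval_hom: fixes y :: "'v \<Rightarrow> real" shows "comm_ring_hom (\<lambda>p. peval (p :: 'v rpoly) y)"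
  by unfold_locales (auto simp: peval_add peval_mult peval_one)

lemma peval_pconst: "peval (pconst c) y = c"
  by (simp add: pconst_def peval_single)

lemma peval_pvar: "peval (pvar i) y = y i"
  by (simp add: pvar_def peval_single mono_ev_def)

lemma peval_det: fixes y :: "'v \<Rightarrow> real" shows "peval (det M) y = det (map_mat (\<lambda>p. peval p y) M)"
proof -
  interpret comm_ring_hom "\<lambda>p. peval (p :: 'v rpoly) y" by (rule peval_hom)
  show ?thesis by simp
qed

definition mdeg :: "('v \<Rightarrow>\<^sub>0 nat) \<Rightarrow> nat" where
  "mdeg m = (\<Sum>i\<in>Poly_Mapping.keys m. Poly_Mapping.lookup m i)"

lemma homog_iff: "homogeneous_poly D p \<longleftrightarrow> (\<forall>m\<in>Poly_Mapping.keys p. mdeg m = D)"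
  by (simp add: homogeneous_poly_def mdeg_def)

lemma mdeg_add: "mdeg (m1 + m2) = mdeg m1 + mdeg m2"
  unfolding mdeg_def by (rule setsum_keys_plus_distrib) auto

lemma homog_add: "homogeneous_poly D p \<Longrightarrow> homogeneous_poly D q \<Longrightarrow> homogeneous_poly D (p + q)"
  unfolding homog_iff using keys_add[of p q] by blast

lemma homog_zero: "homogeneous_poly D 0"
  by (simp add: homog_iff)

lemma homog_uminus: "homogeneous_poly D p \<Longrightarrow> homogeneous_poly D (- p)"
  by (simp add: homog_iff)

lemma homog_diff: "homogeneous_poly D p \<Longrightarrow> homogeneous_poly D q \<Longrightarrow> homogeneous_poly D (p - q)"
  using homog_add[of D p "- q"] homog_uminus[of D q] by simp

lemma homog_mult: "homogeneous_poly D1 p \<Longrightarrow> homogeneous_poly D2 q \<Longrightarrow> homogeneous_poly (D1 + D2) (p * q)"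
  unfolding homog_iff using keys_mult[of p q] by (force simp: mdeg_add)

lemma homog_sum: "(\<And>i. i \<in> A \<Longrightarrow> homogeneous_poly D (f i)) \<Longrightarrow> homogeneous_poly D (\<Sum>i\<in>A. f i)"
  by (induction A rule: infinite_finite_induct) (auto simp: homog_zero homog_add)

lemma homog_one: "homogeneous_poly 0 1"
  by (simp add: homog_iff mdeg_def)

lemma homog_prod: "finite A \<Longrightarrow> (\<And>i. i \<in> A \<Longrightarrow> homogeneous_poly (D i) (f i)) \<Longrightarrow>
   homogeneous_poly (\<Sum>i\<in>A. D i) (\<Prod>i\<in>A. f i)"
  by (induction A rule: finite_induct) (auto simp: homog_one homog_mult)

lemma homog_of_int: "homogeneous_poly 0 (of_int z :: 'v rpoly)"
proof -
  have "Poly_Mapping.keys (of_int z :: 'v rpoly) \<subseteq> {0}"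
  proof
    fix x assume "x \<in> Poly_Mapping.keys (of_int z :: 'v rpoly)"
    then have "Poly_Mapping.lookup (of_int z :: 'v rpoly) x \<noteq> 0" by (simp add: in_keys_iff)
    then have "x = 0" unfolding lookup_of_int when_def by (cases "x = 0") auto
    then show "x \<in> {0}" by simp
  qed
  then show ?thesis unfolding homog_iff
  proof (intro ballI)
    fix m assume "Poly_Mapping.keys (of_int z :: 'v rpoly) \<subseteq> {0}" "m \<in> Poly_Mapping.keys (of_int z :: 'v rpoly)"
    then have "m = 0" by blast
    then show "mdeg m = 0" by (simp add: mdeg_def)
  qed
qed

lemma mdeg_single1: "mdeg (Poly_Mapping.single x (1::nat)) = 1"
  by (simp add: mdeg_def)

lemma homog_lin: "homogeneous_poly 1 (pconst c * pvar x)"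
proof -
  have e: "pconst c * pvar x = Poly_Mapping.single (Poly_Mapping.single x 1) c"
    unfolding pconst_def pvar_def mult_single by simp
  have k: "Poly_Mapping.keys (Poly_Mapping.single (Poly_Mapping.single x (1::nat)) c) \<subseteq> {Poly_Mapping.single x 1}"
    by (simp only: keys_single) (simp split: if_split)
  show ?thesis unfolding e homog_iff
  proof
    fix m assume "m \<in> Poly_Mapping.keys (Poly_Mapping.single (Poly_Mapping.single x (1::nat)) c)"
    then have "m = Poly_Mapping.single x 1" using k by blast
    then show "mdeg m = 1" by (simp only: mdeg_single1)
  qed
qed

lemma La: "\<sigma> permutes {0..<r} \<Longrightarrow> i < r \<Longrightarrow> \<sigma> i < (r::nat)"
  using permutes_in_image by fastforce

lemma Lb:
  fixes A :: "'v rpoly mat"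
  assumes h1: "\<And>p q. p < r \<Longrightarrow> q < r \<Longrightarrow> homogeneous_poly 1 (A $$ (p,q))"
    and s: "\<sigma> permutes {0..<r}"
  shows "homogeneous_poly (\<Sum>i\<in>{0..<r}. 1) (\<Prod>i\<in>{0..<r}. A $$ (i, \<sigma> i))"
  apply (rule homog_prod)
   apply (rule finite_atLeastLessThan)
  apply (rule h1)
   apply simp
  apply (rule La[OF s])
  apply simp
  done

lemma Lc:
  fixes A :: "'v rpoly mat"
  assumes h1: "\<And>p q. p < r \<Longrightarrow> q < r \<Longrightarrow> homogeneous_poly 1 (A $$ (p,q))"
    and s: "\<sigma> permutes {0..<r}"
  shows "homogeneous_poly r (\<Prod>i\<in>{0..<r}. A $$ (i, \<sigma> i))"
proof -
  have e: "(\<Sum>i\<in>{0..<r}. (1::nat)) = r" by simp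
  show ?thesis using Lb[OF h1 s] unfolding e .
qed

lemma Ld:
  fixes A :: "'v rpoly mat"
  assumes h1: "\<And>p q. p < r \<Longrightarrow> q < r \<Longrightarrow> homogeneous_poly 1 (A $$ (p,q))"
    and s: "\<sigma> permutes {0..<r}"
  shows "homogeneous_poly r (of_int (sign \<sigma>) * (\<Prod>i\<in>{0..<r}. A $$ (i, \<sigma> i)))"
  using homog_mult[OF homog_of_int Lc[OF h1 s]] by (simp only: add_0)

lemma homog_det:
  fixes A :: "'v rpoly mat"
  assumes A: "A \<in> carrier_mat r r" and h1: "\<And>p q. p < r \<Longrightarrow> q < r \<Longrightarrow> homogeneous_poly 1 (A $$ (p,q))"
  shows "homogeneous_poly r (det A)"
  unfolding det_def'[OF A]
  apply (rule homog_sum)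
  apply (rule Ld)
   apply (rule h1; assumption)
  apply simp
  done

lemma D_poly_eval:
  fixes k L f :: "nat \<Rightarrow> nat"
  shows "peval (det (mat r r (\<lambda>(p,q). pconst (omega (k (f p)) (k p)) * pvar (ycoord n j (k (f p)) (k p) (L q))))) y
     = Dval r k n j f L y"
proof -
  let ?M = "mat r r (\<lambda>(p,q). pconst (omega (k (f p)) (k p)) * pvar (ycoord n j (k (f p)) (k p) (L q)))"
  have "map_mat (\<lambda>p. peval p y) ?M = mat r r (\<lambda>(p, q). omega (k (f p)) (k p) * y (ycoord n j (k (f p)) (k p) (L q)))"
    unfolding map_mat_def
  proof (rule cong_mat)
    fix p q assume pq: "p < dim_row ?M" "q < dim_col ?M"
    then have "p < r" "q < r" by simp_all
    then have "?M $$ (p,q) = pconst (omega (k (f p)) (k p)) * pvar (ycoord n j (k (f p)) (k p) (L q))"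
      by (subst index_mat(1)) (simp_all only: prod.case)
    then show "peval (?M $$ (p,q)) y = (\<lambda>(p, q). omega (k (f p)) (k p) * y (ycoord n j (k (f p)) (k p) (L q))) (p,q)"
      by (simp only: peval_mult peval_pconst peval_pvar prod.case)
  qed simp_all
  then show ?thesis unfolding Dval_def peval_det by (simp only:)
qed

lemma D_poly_homog:
  fixes k L f :: "nat \<Rightarrow> nat"
  shows "homogeneous_poly r (det (mat r r (\<lambda>(p,q). pconst (omega (k (f p)) (k p)) * pvar (ycoord n j (k (f p)) (k p) (L q)))))"
proof (rule homog_det)
  show "mat r r (\<lambda>(p,q). pconst (omega (k (f p)) (k p)) * pvar (ycoord n j (k (f p)) (k p) (L q))) \<in> carrier_mat r r"
    by (rule mat_carrier)
  fix p q assume "p < r" "q < r"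
  then have "mat r r (\<lambda>(p,q). pconst (omega (k (f p)) (k p)) * pvar (ycoord n j (k (f p)) (k p) (L q))) $$ (p,q)
     = pconst (omega (k (f p)) (k p)) * pvar (ycoord n j (k (f p)) (k p) (L q))"
    by (subst index_mat(1)) (simp_all only: prod.case)
  then show "homogeneous_poly 1 (mat r r (\<lambda>(p,q). pconst (omega (k (f p)) (k p)) * pvar (ycoord n j (k (f p)) (k p) (L q))) $$ (p,q))"
    by (simp only: homog_lin)
qed

lemma prod_fibers:
  fixes f :: "nat \<Rightarrow> nat"
  assumes adm: "admissible_f r \<alpha> f"
  shows "(\<Prod>i\<in>{0..<r}. h (f i)) = (\<Prod>m<r. (h m :: real) ^ \<alpha> m)"
proof -
  have fr: "f ` {..<r} \<subseteq> {..<r}" using adm unfolding admissible_f_def by auto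
  have "(\<Prod>i\<in>{0..<r}. h (f i)) = (\<Prod>i\<in>{..<r}. h (f i))" by (simp add: atLeast0LessThan)
  also have "\<dots> = (\<Prod>m\<in>{..<r}. \<Prod>i\<in>{x. x \<in> {..<r} \<and> f x = m}. h (f i))"
    by (rule prod.group[symmetric, OF _ _ fr]) auto
  also have "\<dots> = (\<Prod>m<r. h m ^ \<alpha> m)"
  proof (rule prod.cong[OF refl])
    fix m assume m: "m \<in> {..<r}"
    have "(\<Prod>i\<in>{x. x \<in> {..<r} \<and> f x = m}. h (f i)) = (\<Prod>i\<in>{x. x \<in> {..<r} \<and> f x = m}. h m)"
      by (rule prod.cong) auto
    also have "\<dots> = h m ^ card {x. x \<in> {..<r} \<and> f x = m}" by simp
    also have "card {x. x \<in> {..<r} \<and> f x = m} = \<alpha> m"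
      using adm m unfolding admissible_f_def by auto
    finally show "(\<Prod>i\<in>{x. x \<in> {..<r} \<and> f x = m}. h (f i)) = h m ^ \<alpha> m" .
  qed
  finally show ?thesis .
qed

lemma D_mu:
  fixes k L f :: "nat \<Rightarrow> nat"
  assumes jt: "j < t" and nt: "n < t" and nj: "n \<noteq> j"
    and kinj: "inj_on k {..<r}" and kd: "\<forall>p<r. k p < d"
    and adm: "admissible_f r \<alpha> f" and L: "distinct_tuple d r L"
  shows "Dval r k n j f L (mu a d t Q K v) =
     (\<Prod>m<r. v (k m) ^ \<alpha> m) * det (mat r r (\<lambda>(p,q). Amat a Q K (k p) (L q)))"
proof -
  have fr: "\<forall>p<r. f p < r" and cyc: "\<forall>p<r. \<forall>i\<ge>1. (f ^^ i) p = p \<longrightarrow> f p = p"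
    using adm unfolding admissible_f_def by auto
  have Ld: "\<forall>q<r. L q < d" using L unfolding distinct_tuple_def by auto
  let ?c = "\<lambda>p. v (k (f p))"
  let ?e = "\<lambda>p. if f p = p then 0 else v (k p)"
  let ?a = "\<lambda>p q. Amat a Q K (k p) (L q)"
  have "mat r r (\<lambda>(p,q). omega (k (f p)) (k p) * mu a d t Q K v (ycoord n j (k (f p)) (k p) (L q)))
      = mat r r (\<lambda>(p,q). ?c p * ?a p q + ?e p * ?a (f p) q)"
  proof (rule cong_mat)
    fix p q assume p: "p < r" and q: "q < r"
    have fp: "f p < r" using fr p by auto
    have kk: "k (f p) = k p \<longleftrightarrow> f p = p" using kinj p fp unfolding inj_on_def by auto
    show "(\<lambda>(p,q). omega (k (f p)) (k p) * mu a d t Q K v (ycoord n j (k (f p)) (k p) (L q))) (p,q)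
       = (\<lambda>(p,q). ?c p * ?a p q + ?e p * ?a (f p) q) (p,q)"
      using mu_entry[OF jt nt nj, of "k (f p)" d "k p" "L q" a Q K v] kd p fp Ld q kk
      by auto
  qed simp_all
  then have "Dval r k n j f L (mu a d t Q K v) = det (mat r r (\<lambda>(p,q). ?c p * ?a p q + ?e p * ?a (f p) q))"
    unfolding Dval_def by simp
  also have "\<dots> = (\<Prod>i\<in>{0..<r}. ?c i) * det (mat r r (\<lambda>(p,q). ?a p q))"
    by (rule det_forest[OF fr cyc]) auto
  also have "(\<Prod>i\<in>{0..<r}. ?c i) = (\<Prod>m<r. v (k m) ^ \<alpha> m)"
    by (rule prod_fibers[OF adm])
  finally show ?thesis .
qed

lemma multi_index_add:
  assumes r: "2 \<le> r" and b: "multi_index r 1 \<beta>" and g: "multi_index r (r - 1) \<gamma>"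
  shows "multi_index r r (\<lambda>m. \<beta> m + \<gamma> m)"
  using assms unfolding multi_index_def by (auto simp: sum.distrib)

lemma peval_diff: "peval (p - q) y = peval p y - peval (q :: 'v rpoly) y"
  using peval_add[of "p - q" q y] by (simp only: diff_add_cancel)

theorem mainTheorem14:
  fixes a d t r j n :: nat
    and k :: "nat \<Rightarrow> nat"
    and F :: "(nat \<Rightarrow> nat) \<Rightarrow> nat \<Rightarrow> nat"
    and \<beta>1 \<beta>2 \<gamma>1 \<gamma>2 L1 L2 :: "nat \<Rightarrow> nat"
  assumes "t > 1" and "j < t" and "n < t" and "n \<noteq> j"
    and "2 \<le> r" and "r \<le> min a d"
    and "inj_on k {..<r}" and "\<forall>p<r. k p < d"
    and "\<forall>\<alpha>. multi_index r r \<alpha> \<longrightarrow> admissible_f r \<alpha> (F \<alpha>)"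
    and "multi_index r 1 \<beta>1" and "multi_index r 1 \<beta>2"
    and "multi_index r (r - 1) \<gamma>1" and "multi_index r (r - 1) \<gamma>2"
    and "distinct_tuple d r L1" and "distinct_tuple d r L2"
  shows "(\<exists>P :: coord rpoly. homogeneous_poly (2 * r) P \<and>
            (\<forall>y. peval P y = CK r k n j F \<beta>1 \<gamma>1 L1 y * CK r k n j F \<beta>2 \<gamma>2 L2 y
                            - CK r k n j F \<beta>1 \<gamma>2 L2 y * CK r k n j F \<beta>2 \<gamma>1 L1 y))
         \<and> (\<forall>y\<in>attention_variety a d t.
              CK r k n j F \<beta>1 \<gamma>1 L1 y * CK r k n j F \<beta>2 \<gamma>2 L2 y
              - CK r k n j F \<beta>1 \<gamma>2 L2 y * CK r k n j F \<beta>2 \<gamma>1 L1 y = 0)"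
proof -
  note jt = assms(2) and nt = assms(3) and nj = assms(4) and r2 = assms(5)
    and kinj = assms(7) and kd = assms(8) and Fadm = assms(9)
  define Mp :: "(nat \<Rightarrow> nat) \<Rightarrow> (nat \<Rightarrow> nat) \<Rightarrow> coord rpoly mat" where
    "Mp f L = mat r r (\<lambda>(p,q). pconst (omega (k (f p)) (k p)) * pvar (ycoord n j (k (f p)) (k p) (L q)))" for f L
  define ab where "ab \<beta> \<gamma> = F (\<lambda>m. \<beta> m + \<gamma> m)" for \<beta> \<gamma> :: "nat \<Rightarrow> nat"
  define P where "P = det (Mp (ab \<beta>1 \<gamma>1) L1) * det (Mp (ab \<beta>2 \<gamma>2) L2)
                    - det (Mp (ab \<beta>1 \<gamma>2) L2) * det (Mp (ab \<beta>2 \<gamma>1) L1)"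
  define minor where "minor y = CK r k n j F \<beta>1 \<gamma>1 L1 y * CK r k n j F \<beta>2 \<gamma>2 L2 y
                            - CK r k n j F \<beta>1 \<gamma>2 L2 y * CK r k n j F \<beta>2 \<gamma>1 L1 y" for y
  have ev: "peval (det (Mp f L)) y = Dval r k n j f L y" for f L y
    unfolding Mp_def by (rule D_poly_eval)
  have hd: "homogeneous_poly r (det (Mp f L))" for f L
    unfolding Mp_def by (rule D_poly_homog)
  have Peval: "peval P y = minor y" for y
    unfolding P_def minor_def CK_def ab_def
    by (simp only: peval_diff peval_mult ev)
  have hrr: "homogeneous_poly (r + r) P"
    unfolding P_def by (intro homog_diff homog_mult hd)
  have Phom: "homogeneous_poly (2 * r) P"
    using hrr by (simp only: mult_2)
  have vanish: "minor (mu a d t Q K v) = 0" for Q K v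
  proof -
    define c where "c \<alpha> = (\<Prod>m<r. v (k m) ^ \<alpha> m)" for \<alpha> :: "nat \<Rightarrow> nat"
    define dA where "dA L = det (mat r r (\<lambda>(p,q). Amat a Q K (k p) (L q)))" for L :: "nat \<Rightarrow> nat"
    have CKmu: "CK r k n j F \<beta> \<gamma> L (mu a d t Q K v) = c (\<lambda>m. \<beta> m + \<gamma> m) * dA L"
      if "multi_index r 1 \<beta>" "multi_index r (r - 1) \<gamma>" "distinct_tuple d r L" for \<beta> \<gamma> L
    proof -
      have "admissible_f r (\<lambda>m. \<beta> m + \<gamma> m) (F (\<lambda>m. \<beta> m + \<gamma> m))"
        using Fadm multi_index_add[OF r2 that(1,2)] by blast
      then show ?thesis unfolding CK_def c_def dA_def
        by (rule D_mu[OF jt nt nj kinj kd _ that(3)])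
    qed
    have cc: "c (\<lambda>m. \<beta>1 m + \<gamma>1 m) * c (\<lambda>m. \<beta>2 m + \<gamma>2 m) = c (\<lambda>m. \<beta>1 m + \<gamma>2 m) * c (\<lambda>m. \<beta>2 m + \<gamma>1 m)"
      unfolding c_def prod.distrib[symmetric] power_add[symmetric]
      by (rule prod.cong[OF refl]) (simp add: ac_simps)
    show ?thesis unfolding minor_def
      using assms(10-15) 
      apply (simp only: CKmu)
      using cc by (metis (no_types, lifting) mult.assoc mult.commute right_minus_eq)
  qed
  have main: "(\<exists>P :: coord rpoly. homogeneous_poly (2 * r) P \<and> (\<forall>y. peval P y = minor y))
     \<and> (\<forall>y\<in>attention_variety a d t. minor y = 0)"
  proof (intro conjI)
    show "\<exists>P :: coord rpoly. homogeneous_poly (2 * r) P \<and> (\<forall>y. peval P y = minor y)"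
      using Phom Peval by blast
  next
    show "\<forall>y\<in>attention_variety a d t. minor y = 0"
    proof
      fix y assume "y \<in> attention_variety a d t"
      then have "\<forall>z\<in>{mu a d t Q K v | Q K v. True}. peval P z = 0 \<Longrightarrow> peval P y = 0"
        unfolding attention_variety_def zariski_closure_def by blast
      moreover have "\<forall>z\<in>{mu a d t Q K v | Q K v. True}. peval P z = 0"
        using vanish by (auto simp: Peval)
      ultimately show "minor y = 0" using Peval by simp
    qed
  qed
  then show ?thesis unfolding minor_def .
qed

end
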